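(* For every integer $d \ge 0$, \[ \lambda_\infty^d \;=\; \frac{1}{d!}\cdot\begin{cases} T_d, & d \text{ odd},\\ E_d, & d \text{ even},\end{cases} \] where $\lambda_\infty^d := t_0^d + 2\sum_{j=1}^{r}(-1)^j t_j^d$ with $r=\lfloor d/2\rfloor$ and $t_j^d := N^d\!\left(j+\frac{d+1}{2}\right)$.
   Context: Truncated powers: for $d>0$, $(x-i)_+^d = (x-i)^d$ if $x\ge i$ and $0$ otherwise; $(x-i)_+^0 = 1$ if $x \ge i$ and $0$ if $x<i$. The normalized cardinal B-spline of degree $d$ (with simple knots $0,1,\dots,d+1$) is $N^d(x) = \frac{1}{d!}\sum_{i=0}^{d+1}(-1)^i\binom{d+1}{i}(x-i)_+^d$. The tangent numbers $T_n$ and Euler numbers $E_n$ are defined by $\tan t = \sum_{n\ge 0} T_n \frac{t^n}{n!}$ and $\sec t = \sum_{n\ge0} E_n\frac{t^n}{n!}$. *)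

theory Defs
  imports "HOL-Analysis.Analysis" "HOL-Computational_Algebra.Formal_Power_Series"
begin

(* truncated power (x)_+^d ; for d = 0 this is 1 if x >= 0 and 0 otherwise (0^0 = 1) *)
definition tpow :: "nat \<Rightarrow> real \<Rightarrow> real" where
  "tpow d x = (if x \<ge> 0 then x ^ d else 0)"

definition bspline :: "nat \<Rightarrow> real \<Rightarrow> real" where
  "bspline d x = (1 / fact d) *
     (\<Sum>i=0..d+1. (-1) ^ i * real ((d+1) choose i) * tpow d (x - real i))"

definition tangent_number :: "nat \<Rightarrow> real" where
  "tangent_number n = fact n * fps_nth (fps_tan (1::real)) n"

definition euler_number :: "nat \<Rightarrow> real" where
  "euler_number n = fact n * fps_nth (inverse (fps_cos (1::real))) n"

definition tval :: "nat \<Rightarrow> nat \<Rightarrow> real" where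
  "tval d j = bspline d (real j + (real d + 1) / 2)"

definition lambda_inf :: "nat \<Rightarrow> real" where
  "lambda_inf d = tval d 0 + 2 * (\<Sum>j=1..d div 2. (-1) ^ j * tval d j)"

end

theory Submission
  imports Defs "HOL-Computational_Algebra.Polynomial"
begin

lemma pascal_diff:
  fixes f :: "nat \<Rightarrow> real"
  shows "(\<Sum>i\<le>Suc n. (-1)^i * real (Suc n choose i) * f i) =
         (\<Sum>i\<le>n. (-1)^i * real (n choose i) * (f i - f (Suc i)))"
proof -
  have A: "(\<Sum>i\<le>Suc n. (-1)^i * real (n choose i) * f i) = (\<Sum>i\<le>n. (-1)^i * real (n choose i) * f i)"
    by (simp add: sum.atMost_Suc)
  have "(\<Sum>i\<le>Suc n. (-1)^i * real (Suc n choose i) * f i)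
      = f 0 + (\<Sum>i\<le>n. (-1)^Suc i * real (n choose i) * f (Suc i))
            + (\<Sum>i\<le>n. (-1)^Suc i * real (n choose Suc i) * f (Suc i))"
    unfolding sum.atMost_Suc_shift by (simp del: sum.atMost_Suc add: algebra_simps sum.distrib sum_subtractf sum_negf)
  moreover have B: "(\<Sum>i\<le>n. (-1)^Suc i * real (n choose Suc i) * f (Suc i))
      = (\<Sum>i\<le>Suc n. (-1)^i * real (n choose i) * f i) - f 0"
    unfolding sum.atMost_Suc_shift by (simp del: sum.atMost_Suc)
  moreover have C: "(\<Sum>i\<le>n. (-1)^Suc i * real (n choose i) * f (Suc i))
     = - (\<Sum>i\<le>n. (-1)^i * real (n choose i) * f (Suc i))"
    by (simp add: sum_negf[symmetric])
  moreover have D: "(\<Sum>i\<le>n. (-1)^i * real (n choose i) * (f i - f (Suc i)))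
     = (\<Sum>i\<le>n. (-1)^i * real (n choose i) * f i) - (\<Sum>i\<le>n. (-1)^i * real (n choose i) * f (Suc i))"
    by (simp add: sum_subtractf[symmetric] algebra_simps)
  ultimately show ?thesis using A by linarith
qed

lemma fd:
  "j < n \<Longrightarrow> (\<Sum>i\<le>n. (-1)^i * real (n choose i) * (y - real i)^j) = 0"
proof (induction n arbitrary: j y)
  case 0 then show ?case by simp
next
  case (Suc n)
  have "(\<Sum>i\<le>Suc n. (-1)^i * real (Suc n choose i) * (y - real i)^j)
     = (\<Sum>i\<le>n. (-1)^i * real (n choose i) * ((y - real i)^j - (y - real (Suc i))^j))"
    by (rule pascal_diff)
  also have "\<dots> = 0"
  proof (cases j)
    case 0 then show ?thesis by simp
  next
    case (Suc k)
    have kn: "k < n" using Suc.prems Suc by simp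
    have diff: "(y - real i)^j - (y - real (Suc i))^j
        = (\<Sum>l\<le>k. real (Suc k choose l) * (y - 1 - real i)^l)" for i
    proof -
      have "(y - real i)^j = ((y - 1 - real i) + 1)^Suc k" using Suc by simp
      also have "\<dots> = (\<Sum>l\<le>Suc k. real (Suc k choose l) * (y - 1 - real i)^l)"
        by (subst binomial_ring) (simp add: atLeast0AtMost mult_ac)
      finally show ?thesis using Suc by (simp add: sum.atMost_Suc algebra_simps)
    qed
    have "(\<Sum>i\<le>n. (-1)^i * real (n choose i) * ((y - real i)^j - (y - real (Suc i))^j))
        = (\<Sum>l\<le>k. real (Suc k choose l) * (\<Sum>i\<le>n. (-1)^i * real (n choose i) * (y - 1 - real i)^l))"
      unfolding diff by (simp add: sum_distrib_left sum_distrib_right mult_ac sum.swap[of _ "{..k}"])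
    also have "\<dots> = 0"
      using Suc.IH[of _ "y - 1"] kn by (intro sum.neutral) auto
    finally show ?thesis .
  qed
  finally show ?case .
qed

definition Pf :: "nat \<Rightarrow> real \<Rightarrow> real" where
  "Pf d x = (\<Sum>j\<le>d. (-1)^j * (\<Sum>i\<le>j. (-1)^i * real (Suc d choose i) * (x + real j - real i)^d))"

lemma FE: "Pf d x + Pf d (x + 1) = 2^(Suc d) * x^d"
proof -
  define S where "S j = (\<Sum>i\<le>j. (-1)^i * real (Suc d choose i) * (x + real j - real i)^d)" for j
  have P0: "Pf d x = (\<Sum>j\<le>d. (-1)^j * S j)" by (simp add: Pf_def S_def)
  have S1: "(\<Sum>i\<le>j. (-1)^i * real (Suc d choose i) * (x + 1 + real j - real i)^d)
      = S (Suc j) - (-1)^(Suc j) * real (Suc d choose Suc j) * x^d" for j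
    by (simp add: S_def add_ac)
  have P1: "Pf d (x+1) = (\<Sum>j\<le>d. (-1)^j * S (Suc j)) + (\<Sum>j\<le>d. real (Suc d choose Suc j)) * x^d"
    unfolding Pf_def S1 by (simp add: algebra_simps sum_subtractf sum_distrib_right sum_distrib_left sum.distrib)
  have cs: "(\<Sum>j\<le>d. real (Suc d choose Suc j)) = 2^(Suc d) - 1"
  proof -
    have "(\<Sum>j\<le>Suc d. real (Suc d choose j)) = 2^(Suc d)"
      using choose_row_sum[of "Suc d"] by (metis of_nat_numeral of_nat_power of_nat_sum)
    then show ?thesis unfolding sum.atMost_Suc_shift by (simp del: sum.atMost_Suc)
  qed
  have tel: "(\<Sum>j\<le>d. (-1)^j * S j) + (\<Sum>j\<le>d. (-1)^j * S (Suc j)) = S 0 - (-1)^(Suc d) * S (Suc d)"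
  proof -
    have "(\<Sum>j\<le>d. (-1)^j * S j) + (\<Sum>j\<le>d. (-1)^j * S (Suc j))
        = (\<Sum>j\<le>d. (\<lambda>j. (-1)^j * S j) j - (\<lambda>j. (-1)^j * S j) (Suc j))"
      by (simp add: sum.distrib)
    also have "\<dots> = S 0 - (-1)^(Suc d) * S (Suc d)" using sum_telescope[of "\<lambda>j. (-1)^j * S j" d] by simp
    finally show ?thesis .
  qed
  have S0: "S 0 = x^d" by (simp add: S_def)
  have SS: "S (Suc d) = 0"
  proof -
    have "S (Suc d) = (\<Sum>i\<le>Suc d. (-1)^i * real (Suc d choose i) * ((x + real (Suc d)) - real i)^d)"
      by (simp add: S_def)
    also have "\<dots> = 0" by (rule fd) simp
    finally show ?thesis .
  qed
  have "Pf d x + Pf d (x+1) = ((\<Sum>j\<le>d. (-1)^j * S j) + (\<Sum>j\<le>d. (-1)^j * S (Suc j))) + (2^(Suc d) - 1) * x^d"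
    unfolding P0 P1 cs by (simp only: add.assoc)
  also have "\<dots> = x^d + (2^(Suc d) - 1) * x^d" unfolding tel S0 SS by simp
  finally show ?thesis by (simp add: algebra_simps)
qed

definition polyfun :: "(real \<Rightarrow> real) \<Rightarrow> bool" where
  "polyfun f \<longleftrightarrow> (\<exists>p. \<forall>x. f x = poly p x)"

lemma polyfun_const: "polyfun (\<lambda>x. c)"
  unfolding polyfun_def by (rule exI[of _ "[:c:]"]) simp

lemma polyfun_shift_pow: "polyfun (\<lambda>x. (x + c)^k)"
  unfolding polyfun_def by (rule exI[of _ "[:c,1:]^k"]) (simp add: add_ac)

lemma polyfun_add: "polyfun f \<Longrightarrow> polyfun g \<Longrightarrow> polyfun (\<lambda>x. f x + g x)"
  unfolding polyfun_def by (metis poly_add)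

lemma polyfun_diff: "polyfun f \<Longrightarrow> polyfun g \<Longrightarrow> polyfun (\<lambda>x. f x - g x)"
  unfolding polyfun_def by (metis poly_diff)

lemma polyfun_mult: "polyfun f \<Longrightarrow> polyfun g \<Longrightarrow> polyfun (\<lambda>x. f x * g x)"
  unfolding polyfun_def by (metis poly_mult)

lemma polyfun_cmult: "polyfun g \<Longrightarrow> polyfun (\<lambda>x. c * g x)"
  using polyfun_mult[OF polyfun_const] .

lemma polyfun_sum: "finite A \<Longrightarrow> (\<And>i. i \<in> A \<Longrightarrow> polyfun (f i)) \<Longrightarrow> polyfun (\<lambda>x. \<Sum>i\<in>A. f i x)"
  by (induction A rule: finite_induct) (auto intro: polyfun_const polyfun_add)

lemma polyfun_compose: "polyfun f \<Longrightarrow> polyfun (\<lambda>x. f (x + h))"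
  unfolding polyfun_def
proof (elim exE)
  fix p assume "\<forall>x. f x = poly p x"
  then show "\<exists>q. \<forall>x. f (x + h) = poly q x"
    by (intro exI[of _ "pcompose p [:h,1:]"]) (simp add: poly_pcompose add_ac)
qed

lemma polyfun_Pf: "polyfun (Pf d)"
proof -
  have "polyfun (\<lambda>x. \<Sum>j\<le>d. (-1)^j * (\<Sum>i\<le>j. (-1)^i * real (Suc d choose i) * (x + (real j - real i))^d))"
    by (intro polyfun_sum polyfun_cmult polyfun_shift_pow) auto
  moreover have "Pf d = (\<lambda>x. \<Sum>j\<le>d. (-1)^j * (\<Sum>i\<le>j. (-1)^i * real (Suc d choose i) * (x + (real j - real i))^d))"
    by (simp add: fun_eq_iff Pf_def add_diff_eq)
  ultimately show ?thesis by simp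
qed

lemma uniq:
  assumes pf: "polyfun f" and h: "\<And>x. f x + f (x + 1) = 0"
  shows "f x = 0"
proof -
  obtain p where p: "\<And>x. f x = poly p x" using pf unfolding polyfun_def by blast
  have per: "f (y + 2) = f y" for y
    using h[of y] h[of "y+1"] by (simp add: add.assoc)
  have ev: "f (2 * real n) = f 0" for n
    by (induction n) (simp_all add: algebra_simps per[of "2 * real _", simplified add.commute] , metis per add.commute)
  define q where "q = p - [:f 0:]"
  have "q = 0"
  proof (rule ccontr)
    assume "q \<noteq> 0"
    then have fin: "finite {x. poly q x = 0}" by (rule poly_roots_finite)
    have "range (\<lambda>n::nat. 2 * real n) \<subseteq> {x. poly q x = 0}"
      using ev p by (auto simp: q_def)
    moreover have "infinite (range (\<lambda>n::nat. 2 * real n))"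
      by (rule range_inj_infinite) (simp add: inj_on_def)
    ultimately show False using fin finite_subset by blast
  qed
  then have pc: "p = [:f 0:]" by (simp add: q_def)
  have c: "f y = f 0" for y using p[of y] pc by simp
  show ?thesis using h[of 0] c[of x] c[of 1] by simp
qed

lemma shift: "Pf n (x + h) = (\<Sum>j\<le>n. real (n choose j) * (2*h)^j * Pf (n - j) x)"
proof -
  define R where "R x = Pf n (x + h) - (\<Sum>j\<le>n. real (n choose j) * (2*h)^j * Pf (n - j) x)" for x
  have pR: "polyfun R"
    unfolding R_def[abs_def]
    by (intro polyfun_diff polyfun_compose polyfun_Pf polyfun_sum polyfun_cmult) auto
  have "R y + R (y + 1) = 0" for y
  proof -
    have e1: "Pf n (y + h) + Pf n (y + 1 + h) = 2^(Suc n) * (y + h)^n"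
      using FE[of n "y + h"] by (simp add: add_ac)
    have e2: "(\<Sum>j\<le>n. real (n choose j) * (2*h)^j * Pf (n - j) y) +
              (\<Sum>j\<le>n. real (n choose j) * (2*h)^j * Pf (n - j) (y+1))
            = (\<Sum>j\<le>n. real (n choose j) * (2*h)^j * (2^(Suc (n-j)) * y^(n-j)))"
      unfolding sum.distrib[symmetric] by (rule sum.cong[OF refl]) (simp only: distrib_left[symmetric] FE)
    have e3: "(\<Sum>j\<le>n. real (n choose j) * (2*h)^j * (2^(Suc (n-j)) * y^(n-j)))
            = 2^(Suc n) * (\<Sum>j\<le>n. real (n choose j) * h^j * y^(n-j))"
    proof -
      have "real (n choose j) * (2*h)^j * (2^(Suc (n-j)) * y^(n-j))
           = 2^(Suc n) * (real (n choose j) * h^j * y^(n-j))" if "j \<le> n" for j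
      proof -
        have "(2::real)^j * 2^(Suc (n-j)) = 2^(Suc n)"
          using that by (simp flip: power_add)
        then show ?thesis by (simp add: power_mult_distrib algebra_simps)
      qed
      note key = this
      show ?thesis unfolding sum_distrib_left by (rule sum.cong[OF refl]) (rule key, simp)
    qed
    have e4: "(y + h)^n = (\<Sum>j\<le>n. real (n choose j) * h^j * y^(n-j))"
      by (subst add.commute) (simp add: binomial_ring atLeast0AtMost mult_ac)
    show ?thesis unfolding R_def using e1 e2 e3 e4 by (simp add: algebra_simps)
  qed
  then have "R x = 0" by (rule uniq[OF pR])
  then show ?thesis by (simp add: R_def)
qed

lemma idE: "(\<Sum>j\<le>n. real (n choose j) * (1 + (-1)^j) * Pf (n-j) (1/2)) = 2 * 0^n"
proof -
  have a: "Pf n 1 = (\<Sum>j\<le>n. real (n choose j) * Pf (n-j) (1/2))"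
    using shift[of n "1/2" "1/2"] by simp
  have b: "Pf n 0 = (\<Sum>j\<le>n. real (n choose j) * (-1)^j * Pf (n-j) (1/2))"
    using shift[of n "1/2" "-1/2"] by simp
  have c: "Pf n 0 + Pf n 1 = 2 * 0^n" using FE[of n 0] by (cases n) simp_all
  show ?thesis using a b c by (simp add: algebra_simps sum.distrib)
qed

lemma idO: "(\<Sum>j\<le>n. real (n choose j) * (1 + (-1)^j) * Pf (n-j) 0) = 2 * (-1)^n"
proof -
  have a: "Pf n (1/2) = (\<Sum>j\<le>n. real (n choose j) * Pf (n-j) 0)"
    using shift[of n 0 "1/2"] by simp
  have b: "Pf n (-1/2) = (\<Sum>j\<le>n. real (n choose j) * (-1)^j * Pf (n-j) 0)"
    using shift[of n 0 "-1/2"] by simp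
  have c: "Pf n (-1/2) + Pf n (1/2) = 2 * (-1)^n"
    using FE[of n "-1/2"] by (simp add: power_mult_distrib[symmetric] power_divide)
  show ?thesis using a b c by (simp add: algebra_simps sum.distrib)
qed

lemma bspline_fact:
  "fact d * bspline d y = (\<Sum>i\<le>Suc d. (-1)^i * real (Suc d choose i) * tpow d (y - real i))"
  by (simp add: bspline_def atLeast0AtMost)

lemma Pf_spline:
  assumes "0 \<le> x" "x < 1"
  shows "Pf d x = (\<Sum>j\<le>d. (-1)^j * (fact d * bspline d (x + real j)))"
  unfolding Pf_def
proof (rule sum.cong[OF refl])
  fix j assume j: "j \<in> {..d}"
  have "(\<Sum>i\<le>Suc d. (-1)^i * real (Suc d choose i) * tpow d (x + real j - real i))
      = (\<Sum>i\<le>j. (-1)^i * real (Suc d choose i) * (x + real j - real i)^d)"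
  proof (rule sum.mono_neutral_cong_right)
    show "finite {..Suc d}" by simp
    show "{..j} \<subseteq> {..Suc d}" using j by auto
    show "\<forall>i\<in>{..Suc d} - {..j}. (-1)^i * real (Suc d choose i) * tpow d (x + real j - real i) = 0"
      using assms by (auto simp: tpow_def)
    show "(-1)^i * real (Suc d choose i) * tpow d (x + real j - real i) = (-1)^i * real (Suc d choose i) * (x + real j - real i)^d"
      if "i \<in> {..j}" for i using that assms by (auto simp: tpow_def)
  qed
  then show "(-1)^j * (\<Sum>i\<le>j. (-1)^i * real (Suc d choose i) * (x + real j - real i)^d) =
      (-1)^j * (fact d * bspline d (x + real j))"
    by (simp add: bspline_fact)
qed

lemma m1_diff: "i \<le> n \<Longrightarrow> (-1::real)^(n-i) = (-1)^n * (-1)^i"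
proof -
  assume "i \<le> n"
  then obtain k where n: "n = i + k" using le_Suc_ex by blast
  have "(-1::real)^i * (-1)^i = 1" by (simp flip: power_add add: power_mult[symmetric] mult_2[symmetric])
  then show ?thesis by (simp add: n power_add algebra_simps)
qed

lemma tpow_refl: assumes "1 \<le> d" shows "tpow d (-u) = (-1)^d * (u^d - tpow d u)"
proof -
  consider "u > 0" | "u = 0" | "u < 0" by linarith
  then show ?thesis
  proof cases
    case 1 then show ?thesis by (simp add: tpow_def)
  next
    case 2 then show ?thesis using assms by (simp add: tpow_def)
  next
    case 3
    have "(-u)^d = (-1)^d * u^d" by (rule power_minus)
    then show ?thesis using 3 by (simp add: tpow_def)
  qed
qed

lemma bspline_sym:
  assumes "1 \<le> d"
  shows "bspline d (real (Suc d) - y) = bspline d y"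
proof -
  have "fact d * bspline d (real (Suc d) - y)
      = (\<Sum>i\<le>Suc d. (-1)^(Suc d - i) * real (Suc d choose (Suc d - i)) * tpow d (real (Suc d) - y - real (Suc d - i)))"
    unfolding bspline_fact atLeast0AtMost[symmetric]
    by (subst sum.atLeastAtMost_rev) simp
  also have "\<dots> = (\<Sum>i\<le>Suc d. - ((-1)^i * real (Suc d choose i) * (y - real i)^d)
                      + (-1)^i * real (Suc d choose i) * tpow d (y - real i))"
  proof (rule sum.cong[OF refl])
    fix i assume i: "i \<in> {..Suc d}"
    have e1: "real (Suc d) - y - real (Suc d - i) = - (y - real i)" using i by (simp add: of_nat_diff)
    have e2: "Suc d choose (Suc d - i) = Suc d choose i" using i by (simp add: binomial_symmetric[symmetric])
    have e3: "(-1::real)^(Suc d - i) = -((-1)^d * (-1)^i)" using i by (simp add: m1_diff)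
    have e4: "(-1::real)^d * (-1)^d = 1" by (simp flip: power_add add: power_mult[symmetric] mult_2[symmetric])
    show "(-1)^(Suc d - i) * real (Suc d choose (Suc d - i)) * tpow d (real (Suc d) - y - real (Suc d - i))
       = - ((-1)^i * real (Suc d choose i) * (y - real i)^d) + (-1)^i * real (Suc d choose i) * tpow d (y - real i)"
      unfolding e1 e2 e3 tpow_refl[OF assms]
      using e4 by (simp add: algebra_simps)
  qed
  also have "\<dots> = fact d * bspline d y"
    using fd[of d "Suc d" y] by (simp only: sum.distrib sum_negf bspline_fact)
  finally show ?thesis by simp
qed


lemma fold_sym:
  fixes \<phi> :: "nat \<Rightarrow> real"
  assumes "\<And>k. k \<le> r \<Longrightarrow> \<phi> (r - k) = \<phi> (r + k)"
  shows "(\<Sum>j\<le>2*r. (-1)^j * \<phi> j) = (-1)^r * (\<phi> r + 2 * (\<Sum>k=1..r. (-1)^k * \<phi> (r + k)))"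
  using assms
proof (induction r arbitrary: \<phi>)
  case 0 then show ?case by simp
next
  case (Suc r)
  define \<psi> where "\<psi> j = \<phi> (Suc j)" for j
  have sym: "\<psi> (r - k) = \<psi> (r + k)" if "k \<le> r" for k
    using Suc.prems[of k] that by (simp add: \<psi>_def Suc_diff_le)
  have IH: "(\<Sum>j\<le>2*r. (-1)^j * \<psi> j) = (-1)^r * (\<psi> r + 2 * (\<Sum>k=1..r. (-1)^k * \<psi> (r + k)))"
    using Suc.IH[of \<psi>] sym by blast
  have e0: "\<phi> 0 = \<phi> (2 * Suc r)" using Suc.prems[of "Suc r"] by (simp add: mult_2)
  have split: "(\<Sum>j\<le>2*Suc r. (-1)^j * \<phi> j) = \<phi> 0 + \<phi> (2 * Suc r) - (\<Sum>j\<le>2*r. (-1)^j * \<psi> j)"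
  proof -
    have t: "2 * Suc r = Suc (Suc (2*r))" by simp
    have "(\<Sum>j\<le>2*Suc r. (-1)^j * \<phi> j) = \<phi> 0 + (\<Sum>j\<le>Suc (2*r). (-1)^Suc j * \<phi> (Suc j))"
      unfolding t by (subst sum.atMost_Suc_shift) (simp del: sum.atMost_Suc)
    also have "(\<Sum>j\<le>Suc (2*r). (-1)^Suc j * \<phi> (Suc j)) = \<phi> (2 * Suc r) - (\<Sum>j\<le>2*r. (-1)^j * \<psi> j)"
      by (simp add: \<psi>_def sum_negf)
    finally show ?thesis by simp
  qed
  have last: "(\<Sum>k=1..Suc r. (-1)^k * \<phi> (Suc r + k)) = (\<Sum>k=1..r. (-1)^k * \<psi> (r + k)) + (-1)^Suc r * \<phi> (2 * Suc r)"
    by (simp add: \<psi>_def mult_2)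
  have m: "(-1::real)^r * (-1)^r = 1" by (simp flip: power_add add: power_mult[symmetric] mult_2[symmetric])
  show ?case unfolding split IH last e0
    using m by (simp add: \<psi>_def algebra_simps)
qed

lemma lam_even: "fact (2*r) * lambda_inf (2*r) = (-1)^r * Pf (2*r) (1/2)"
proof -
  define d where "d = 2*r"
  define \<phi> where "\<phi> j = fact d * bspline d (1/2 + real j)" for j
  have P: "Pf d (1/2) = (\<Sum>j\<le>2*r. (-1)^j * \<phi> j)"
    unfolding \<phi>_def d_def by (subst Pf_spline) (simp_all add: add.commute)
  have sym: "\<phi> (r - k) = \<phi> (r + k)" if k: "k \<le> r" for k
  proof (cases "r = 0")
    case True then show ?thesis using k by simp
  next
    case False
    then have d1: "1 \<le> d" by (simp add: d_def)
    have "real (Suc d) - (1/2 + real (r + k)) = 1/2 + real (r - k)"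
      using k by (simp add: d_def of_nat_diff)
    then show ?thesis using bspline_sym[OF d1, of "1/2 + real (r + k)"] by (simp add: \<phi>_def)
  qed
  have F: "Pf d (1/2) = (-1)^r * (\<phi> r + 2 * (\<Sum>k=1..r. (-1)^k * \<phi> (r + k)))"
    unfolding P by (rule fold_sym) (rule sym)
  have arg: "real j + (real d + 1) / 2 = 1/2 + real (r + j)" for j by (simp add: d_def)
  have T: "fact d * tval d j = \<phi> (r + j)" for j
    by (simp add: tval_def \<phi>_def arg)
  have dd: "d div 2 = r" by (simp add: d_def)
  have "fact d * lambda_inf d = fact d * tval d 0 + 2 * (\<Sum>j=1..r. (-1)^j * (fact d * tval d j))"
    by (simp add: lambda_inf_def dd algebra_simps sum_distrib_left)
  then have L: "fact d * lambda_inf d = \<phi> r + 2 * (\<Sum>k=1..r. (-1)^k * \<phi> (r + k))"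
    by (simp only: T) simp
  have m: "(-1::real)^r * (-1)^r = 1" by (simp flip: power_add add: power_mult[symmetric] mult_2[symmetric])
  show ?thesis using F L m unfolding d_def[symmetric] by (simp add: algebra_simps)
qed

lemma lam_odd: "fact (2*r+1) * lambda_inf (2*r+1) = (-1)^(r+1) * Pf (2*r+1) 0"
proof -
  define d where "d = 2*r+1"
  define \<phi> where "\<phi> j = fact d * bspline d (real (Suc j))" for j
  have N0: "bspline d 0 = 0"
    unfolding bspline_def by (rule mult_eq_0_iff[THEN iffD2], rule disjI2, rule sum.neutral)
      (auto simp: tpow_def d_def)
  have P0: "Pf d 0 = (\<Sum>j\<le>Suc (2*r). (-1)^j * (fact d * bspline d (real j)))"
    by (subst Pf_spline) (simp_all add: d_def)
  also have "\<dots> = (\<Sum>j\<le>2*r. (-1)^Suc j * \<phi> j)"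
    by (subst sum.atMost_Suc_shift) (simp del: sum.atMost_Suc add: N0 \<phi>_def)
  finally have P: "Pf d 0 = - (\<Sum>j\<le>2*r. (-1)^j * \<phi> j)" by (simp add: sum_negf[symmetric])
  have d1: "1 \<le> d" by (simp add: d_def)
  have sym: "\<phi> (r - k) = \<phi> (r + k)" if k: "k \<le> r" for k
  proof -
    have "real (Suc d) - real (Suc (r + k)) = real (Suc (r - k))"
      using k by (simp add: d_def of_nat_diff)
    then show ?thesis using bspline_sym[OF d1, of "real (Suc (r + k))"] by (simp add: \<phi>_def)
  qed
  have F: "Pf d 0 = - ((-1)^r * (\<phi> r + 2 * (\<Sum>k=1..r. (-1)^k * \<phi> (r + k))))"
    unfolding P by (subst fold_sym) (auto intro: sym)
  have arg: "real j + (real d + 1) / 2 = real (Suc (r + j))" for j by (simp add: d_def)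
  have T: "fact d * tval d j = \<phi> (r + j)" for j
    by (simp add: tval_def \<phi>_def arg)
  have dd: "d div 2 = r" by (simp add: d_def)
  have "fact d * lambda_inf d = fact d * tval d 0 + 2 * (\<Sum>j=1..r. (-1)^j * (fact d * tval d j))"
    by (simp add: lambda_inf_def dd algebra_simps sum_distrib_left)
  then have L: "fact d * lambda_inf d = \<phi> r + 2 * (\<Sum>k=1..r. (-1)^k * \<phi> (r + k))"
    by (simp only: T) simp
  have m: "(-1::real)^r * (-1)^r = 1" by (simp flip: power_add add: power_mult[symmetric] mult_2[symmetric])
  define X where "X = \<phi> r + 2 * (\<Sum>k=1..r. (-1)^k * \<phi> (r + k))"
  have "(-1::real)^(r+1) * Pf d 0 = ((-1)^r * (-1)^r) * X"
    unfolding F X_def[symmetric] by simp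
  then have "(-1::real)^(r+1) * Pf d 0 = X" using m by simp
  then show ?thesis using L unfolding d_def[symmetric] X_def by simp
qed

lemma cos_nth: "fps_nth (fps_cos (1::real)) j = (if even j then (-1)^(j div 2) / fact j else 0)"
  by (simp add: fps_cos_def)

lemma termEE:
  assumes n: "even n" and j: "j \<le> n"
  shows "fps_nth (fps_cos (1::real)) j * (if even (n-j) then lambda_inf (n-j) else 0)
       = (-1)^(n div 2) / (2 * fact n) * (real (n choose j) * (1 + (-1)^j) * Pf (n-j) (1/2))"
proof (cases "even j")
  case True
  then obtain r where r: "n - j = 2*r" using n j by (metis dvd_diff_nat evenE)
  have lam: "lambda_inf (n-j) = (-1)^r * Pf (n-j) (1/2) / fact (n-j)"
    using lam_even[of r] unfolding r[symmetric] by (metis nonzero_mult_div_cancel_left fact_nonzero)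
  obtain a where a: "j = 2*a" using True by (rule evenE)
  have "n = 2*(a+r)" using r j a by simp
  then have sg: "j div 2 + r = n div 2" using a by simp
  have sgn: "(-1::real)^(j div 2) * (-1)^r = (-1)^(n div 2)" by (simp flip: power_add add: sg)
  have C: "real (n choose j) = fact n / (fact j * fact (n-j))" by (rule binomial_fact[OF j])
  have ev: "(-1::real)^j = 1" using True by simp
  have evnj: "even (n-j)" using r by simp
  have "fps_nth (fps_cos (1::real)) j * (if even (n-j) then lambda_inf (n-j) else 0)
      = ((-1)^(j div 2) * (-1)^r) * Pf (n-j) (1/2) / (fact j * fact (n-j))"
    using True evnj by (simp add: cos_nth lam)
  also have "\<dots> = (-1)^(n div 2) / (2 * fact n) * (real (n choose j) * (1 + (-1)^j) * Pf (n-j) (1/2))"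
    unfolding sgn C ev by (simp add: field_simps)
  finally show ?thesis .
next
  case False
  then show ?thesis by (simp add: cos_nth)
qed

lemma termOO:
  assumes n: "odd n" and j: "j \<le> n"
  shows "fps_nth (fps_cos (1::real)) j * (if odd (n-j) then lambda_inf (n-j) else 0)
       = (-1)^(n div 2 + 1) / (2 * fact n) * (real (n choose j) * (1 + (-1)^j) * Pf (n-j) 0)"
proof (cases "even j")
  case True
  have "odd (n - j)" using n j True by (simp add: even_diff_nat)
  then obtain r where r: "n - j = 2*r+1" by (rule oddE)
  have lam: "lambda_inf (n-j) = (-1)^(r+1) * Pf (n-j) 0 / fact (n-j)"
    using lam_odd[of r] unfolding r[symmetric] by (metis nonzero_mult_div_cancel_left fact_nonzero)
  obtain a where a: "j = 2*a" using True by (rule evenE)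
  have "n = 2*(a+r) + 1" using r j a by simp
  then have sg: "j div 2 + (r + 1) = n div 2 + 1" using a by simp
  have sgn: "(-1::real)^(j div 2) * (-1)^(r+1) = (-1)^(n div 2 + 1)" by (simp only: power_add[symmetric] sg)
  have C: "real (n choose j) = fact n / (fact j * fact (n-j))" by (rule binomial_fact[OF j])
  have ev: "(-1::real)^j = 1" using True by simp
  have "fps_nth (fps_cos (1::real)) j * (if odd (n-j) then lambda_inf (n-j) else 0)
      = ((-1)^(j div 2) * (-1)^(r+1)) * Pf (n-j) 0 / (fact j * fact (n-j))"
    using True \<open>odd (n-j)\<close> by (simp add: cos_nth lam)
  also have "\<dots> = (-1)^(n div 2 + 1) / (2 * fact n) * (real (n choose j) * (1 + (-1)^j) * Pf (n-j) 0)"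
    unfolding sgn C ev by (simp add: field_simps)
  finally show ?thesis .
next
  case False
  then show ?thesis by (simp add: cos_nth)
qed

definition Ae :: "real fps" where "Ae = Abs_fps (\<lambda>n. if even n then lambda_inf n else 0)"
definition Ao :: "real fps" where "Ao = Abs_fps (\<lambda>n. if odd n then lambda_inf n else 0)"

lemma sin_nth: "fps_nth (fps_sin (1::real)) n = (if even n then 0 else (-1)^((n - 1) div 2) / fact n)"
  by (simp add: fps_sin_def)

lemma prodEE:
  assumes n: "even n"
  shows "fps_nth (fps_cos 1 * Ae) n = (if n = 0 then 1 else 0)"
proof -
  have "fps_nth (fps_cos 1 * Ae) n = (\<Sum>j\<le>n. fps_nth (fps_cos (1::real)) j * (if even (n-j) then lambda_inf (n-j) else 0))"
    by (simp add: fps_mult_nth Ae_def atLeast0AtMost)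
  also have "\<dots> = (\<Sum>j\<le>n. (-1)^(n div 2) / (2 * fact n) * (real (n choose j) * (1 + (-1)^j) * Pf (n-j) (1/2)))"
    by (rule sum.cong[OF refl]) (rule termEE[OF n], simp)
  also have "\<dots> = (-1)^(n div 2) / (2 * fact n) * (2 * 0^n)"
    by (simp only: sum_distrib_left[symmetric] idE)
  also have "\<dots> = (if n = 0 then 1 else 0)" by simp
  finally show ?thesis .
qed

lemma prodOO:
  assumes n: "odd n"
  shows "fps_nth (fps_cos 1 * Ao) n = fps_nth (fps_sin 1) n"
proof -
  have "fps_nth (fps_cos 1 * Ao) n = (\<Sum>j\<le>n. fps_nth (fps_cos (1::real)) j * (if odd (n-j) then lambda_inf (n-j) else 0))"
    by (simp add: fps_mult_nth Ao_def atLeast0AtMost)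
  also have "\<dots> = (\<Sum>j\<le>n. (-1)^(n div 2 + 1) / (2 * fact n) * (real (n choose j) * (1 + (-1)^j) * Pf (n-j) 0))"
    by (rule sum.cong[OF refl]) (rule termOO[OF n], simp)
  also have "\<dots> = (-1)^(n div 2 + 1) / (2 * fact n) * (2 * (-1)^n)"
    by (simp only: sum_distrib_left[symmetric] idO)
  also have "\<dots> = (-1)^((n - 1) div 2) / fact n"
  proof -
    have "(n - 1) div 2 = n div 2" using n by (metis oddE diff_Suc_1 div_mult_self1_is_m zero_less_numeral div2_Suc_Suc add.commute plus_1_eq_Suc odd_two_times_div_two_nat)
    then show ?thesis using n by simp
  qed
  also have "\<dots> = fps_nth (fps_sin 1) n" using n by (simp add: sin_nth)
  finally show ?thesis .
qed

lemma prodEO: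
  assumes n: "odd n"
  shows "fps_nth (fps_cos 1 * Ae) n = 0"
proof -
  have "fps_nth (fps_cos 1 * Ae) n = (\<Sum>j\<le>n. fps_nth (fps_cos (1::real)) j * (if even (n-j) then lambda_inf (n-j) else 0))"
    by (simp add: fps_mult_nth Ae_def atLeast0AtMost)
  also have "\<dots> = 0"
    using n by (intro sum.neutral) (auto simp: cos_nth even_diff_nat)
  finally show ?thesis .
qed

lemma prodOE:
  assumes n: "even n"
  shows "fps_nth (fps_cos 1 * Ao) n = 0"
proof -
  have "fps_nth (fps_cos 1 * Ao) n = (\<Sum>j\<le>n. fps_nth (fps_cos (1::real)) j * (if odd (n-j) then lambda_inf (n-j) else 0))"
    by (simp add: fps_mult_nth Ao_def atLeast0AtMost)
  also have "\<dots> = 0"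
    using n by (intro sum.neutral) (auto simp: cos_nth even_diff_nat)
  finally show ?thesis .
qed

lemma cosAe: "fps_cos 1 * Ae = 1"
proof (rule fps_ext)
  fix n show "fps_nth (fps_cos 1 * Ae) n = fps_nth 1 n"
    by (cases "even n") (auto simp: prodEE prodEO intro: odd_pos)
qed

lemma cosAo: "fps_cos 1 * Ao = fps_sin 1"
proof (rule fps_ext)
  fix n show "fps_nth (fps_cos 1 * Ao) n = fps_nth (fps_sin 1) n"
    by (cases "even n") (auto simp: prodOO prodOE sin_nth)
qed

lemma invcos: "inverse (fps_cos (1::real)) = Ae"
  by (rule fps_inverse_unique[OF cosAe])

lemma tanAo: "fps_tan (1::real) = Ao"
proof -
  have "fps_tan (1::real) = fps_sin 1 * inverse (fps_cos 1)"
    unfolding fps_tan_def by (rule fps_divide_unit) simp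
  also have "\<dots> = Ao * (fps_cos 1 * Ae)" unfolding invcos cosAo[symmetric] by (simp add: mult_ac)
  finally show ?thesis by (simp add: cosAe)
qed

theorem mainTheorem1:
  fixes d :: nat
  shows "lambda_inf d = (1 / fact d) *
           (if odd d then tangent_number d else euler_number d)"
proof (cases "odd d")
  case True
  then show ?thesis by (simp add: tangent_number_def tanAo Ao_def)
next
  case False
  then show ?thesis by (simp add: euler_number_def invcos Ae_def)
qed

end
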